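(* Among all $3\times3$ unimodular zerofree matrices $M$, the minimum of $\|(M\;M^{-1})\|$ is $3$. There are exactly $576$ minimizers, and all of them are equivalent to $$M=\begin{pmatrix}1&2&2\\2&1&2\\2&2&3\end{pmatrix},\qquad M^{-1}=\begin{pmatrix}1&2&-2\\2&1&-2\\-2&-2&3\end{pmatrix}.$$
   Context: A square integer matrix is unimodular if its determinant is $\pm1$. An invertible matrix $Z$ is zerofree if none of the entries of $Z$ and none of the entries of $Z^{-1}$ is zero. For a matrix $A$, $\|A\|$ denotes the maximum of the absolute values of its entries. $(M\;M^{-1})$ denotes the $n\times 2n$ matrix obtained by concatenating $M$ and $M^{-1}$ side by side. Two $n\times n$ matrices $Z,Z'$ are equivalent if $Z'=PZQ$ for some $n\times n$ signed permutation matrices $P,Q$ (permutation matrices whose nonzero entries may be $\pm1$). *)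

theory Defs
  imports "HOL-Analysis.Analysis"
begin

definition unimodular :: "int^'n^'n \<Rightarrow> bool" where
  "unimodular M \<longleftrightarrow> det M = 1 \<or> det M = -1"

definition zerofree :: "'a::comm_ring_1^'n^'n \<Rightarrow> bool" where
  "zerofree Z \<longleftrightarrow> invertible Z \<and> (\<forall>i j. Z $ i $ j \<noteq> 0) \<and> (\<forall>i j. matrix_inv Z $ i $ j \<noteq> 0)"

definition concat_norm :: "int^'n^'n \<Rightarrow> int" where
  "concat_norm M = Max ({\<bar>M $ i $ j\<bar> | i j. True} \<union> {\<bar>matrix_inv M $ i $ j\<bar> | i j. True})"

definition signed_perm_matrix :: "'a::ring_1^'n^'n \<Rightarrow> bool" where
  "signed_perm_matrix P \<longleftrightarrow>
     (\<exists>p s. bij p \<and> (\<forall>i. s i = 1 \<or> s i = -1) \<and>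
            (\<forall>i j. P $ i $ j = (if j = p i then s i else 0)))"

definition mat_equivalent :: "'a::ring_1^'n^'n \<Rightarrow> 'a^'n^'n \<Rightarrow> bool" where
  "mat_equivalent Z Z' \<longleftrightarrow> (\<exists>P Q. signed_perm_matrix P \<and> signed_perm_matrix Q \<and> Z' = P ** Z ** Q)"

definition M0 :: "int^3^3" where
  "M0 = vector [vector [1,2,2], vector [2,1,2], vector [2,2,3]]"

definition M0inv :: "int^3^3" where
  "M0inv = vector [vector [1,2,-2], vector [2,1,-2], vector [-2,-2,3]]"

end

theory Submission
  imports Defs
begin

definition mk :: "int \<Rightarrow> int \<Rightarrow> int \<Rightarrow> int \<Rightarrow> int \<Rightarrow> int \<Rightarrow> int \<Rightarrow> int \<Rightarrow> int \<Rightarrow> int^3^3" where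
  "mk a b c d e f g h i = vector [vector [a,b,c], vector [d,e,f], vector [g,h,i]]"

lemma mk_nth[simp]:
  "mk a b c d e f g h i $ 1 $ 1 = a" "mk a b c d e f g h i $ 1 $ 2 = b" "mk a b c d e f g h i $ 1 $ 3 = c"
  "mk a b c d e f g h i $ 2 $ 1 = d" "mk a b c d e f g h i $ 2 $ 2 = e" "mk a b c d e f g h i $ 2 $ 3 = f"
  "mk a b c d e f g h i $ 3 $ 1 = g" "mk a b c d e f g h i $ 3 $ 2 = h" "mk a b c d e f g h i $ 3 $ 3 = i"
  by (simp_all add: mk_def)

lemma mk_eta: "(M::int^3^3) = mk (M$1$1) (M$1$2) (M$1$3) (M$2$1) (M$2$2) (M$2$3) (M$3$1) (M$3$2) (M$3$3)"
  by (simp add: vec_eq_iff forall_3)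

lemma mk_eq_iff: "mk a b c d e f g h i = mk a' b' c' d' e' f' g' h' i' \<longleftrightarrow>
   a = a' \<and> b = b' \<and> c = c' \<and> d = d' \<and> e = e' \<and> f = f' \<and> g = g' \<and> h = h' \<and> i = i'"
  by (auto simp add: vec_eq_iff forall_3)

lemma mk_mult: "mk a b c d e f g h i ** mk a' b' c' d' e' f' g' h' i' =
  mk (a*a'+b*d'+c*g') (a*b'+b*e'+c*h') (a*c'+b*f'+c*i')
     (d*a'+e*d'+f*g') (d*b'+e*e'+f*h') (d*c'+e*f'+f*i')
     (g*a'+h*d'+i*g') (g*b'+h*e'+i*h') (g*c'+h*f'+i*i')"
  by (simp add: vec_eq_iff forall_3 matrix_matrix_mult_def sum_3)

lemma mat1_mk: "(mat 1 :: int^3^3) = mk 1 0 0 0 1 0 0 0 1"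
  by (simp add: vec_eq_iff forall_3 mat_def)

definition detf :: "int \<Rightarrow> int \<Rightarrow> int \<Rightarrow> int \<Rightarrow> int \<Rightarrow> int \<Rightarrow> int \<Rightarrow> int \<Rightarrow> int \<Rightarrow> int" where
  "detf a b c d e f g h i = a*e*i + b*f*g + c*d*h - a*f*h - b*d*i - c*e*g"

lemma det_mk: "det (mk a b c d e f g h i) = detf a b c d e f g h i"
  by (simp add: det_3 detf_def)

definition invmk where
  "invmk D a b c d e f g h i = mk (D*(e*i-f*h)) (D*(c*h-b*i)) (D*(b*f-c*e))
        (D*(f*g-d*i)) (D*(a*i-c*g)) (D*(c*d-a*f)) (D*(d*h-e*g)) (D*(b*g-a*h)) (D*(a*e-b*d))"

lemma inv_mult1: "mk a b c d e f g h i ** invmk D a b c d e f g h i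
   = mk (D*detf a b c d e f g h i) 0 0 0 (D*detf a b c d e f g h i) 0 0 0 (D*detf a b c d e f g h i)"
  unfolding invmk_def mk_mult mk_eq_iff detf_def by (simp add: algebra_simps)

lemma inv_mult2: "invmk D a b c d e f g h i ** mk a b c d e f g h i
   = mk (D*detf a b c d e f g h i) 0 0 0 (D*detf a b c d e f g h i) 0 0 0 (D*detf a b c d e f g h i)"
  unfolding invmk_def mk_mult mk_eq_iff detf_def by (simp add: algebra_simps)

lemma matrix_inv_unique:
  fixes M N :: "int^3^3"
  assumes "M ** N = mat 1" "N ** M = mat 1"
  shows "matrix_inv M = N" "invertible M"
proof -
  have ex: "\<exists>X. M ** X = mat 1 \<and> X ** M = mat 1" using assms by blast
  then have X: "M ** matrix_inv M = mat 1 \<and> matrix_inv M ** M = mat 1"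
    unfolding matrix_inv_def by (rule someI_ex)
  have "matrix_inv M = matrix_inv M ** (M ** N)" using assms by (simp add: matrix_mul_rid)
  also have "\<dots> = (matrix_inv M ** M) ** N" by (simp add: matrix_mul_assoc)
  also have "\<dots> = N" using X by (simp add: matrix_mul_lid)
  finally show "matrix_inv M = N" .
  show "invertible M" using ex unfolding invertible_def by blast
qed

lemma inv_mk:
  assumes "detf a b c d e f g h i = 1 \<or> detf a b c d e f g h i = -1"
  shows "matrix_inv (mk a b c d e f g h i) = invmk (detf a b c d e f g h i) a b c d e f g h i"
    "invertible (mk a b c d e f g h i)"
proof -
  let ?D = "detf a b c d e f g h i"
  have "?D * ?D = 1" using assms by auto
  then have 1: "mk a b c d e f g h i ** invmk ?D a b c d e f g h i = mat 1"
     "invmk ?D a b c d e f g h i ** mk a b c d e f g h i = mat 1"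
    by (simp_all only: inv_mult1 inv_mult2 mat1_mk)
  show "matrix_inv (mk a b c d e f g h i) = invmk ?D a b c d e f g h i"
    "invertible (mk a b c d e f g h i)" using matrix_inv_unique[OF 1] by auto
qed

definition okv :: "int \<Rightarrow> bool" where "okv x \<longleftrightarrow> x \<noteq> 0 \<and> -3 \<le> x \<and> x \<le> 3"

definition enum :: "(int\<times>int\<times>int\<times>int\<times>int\<times>int\<times>int\<times>int\<times>int) list" where
 "enum = [(a,b,c,d,e,f,g,h,i). a \<leftarrow> [1,2,3], b \<leftarrow> [1,2,3], c \<leftarrow> [1,2,3], d \<leftarrow> [1,2,3],
     e \<leftarrow> [-3,-2,-1,1,2,3], okv (a*e-b*d), f \<leftarrow> [-3,-2,-1,1,2,3], okv (a*f-c*d), okv (b*f-c*e),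
     g \<leftarrow> [1,2,3], h \<leftarrow> [-3,-2,-1,1,2,3], okv (a*h-b*g), okv (d*h-e*g),
     i \<leftarrow> [-3,-2,-1,1,2,3], okv (a*i-c*g), okv (b*i-c*h), okv (d*i-f*g), okv (e*i-f*h),
     detf a b c d e f g h i = 1 \<or> detf a b c d e f g h i = -1]"

definition L18 :: "(int\<times>int\<times>int\<times>int\<times>int\<times>int\<times>int\<times>int\<times>int) list" where
  "L18 = [(1, 2, 2, 2, 1, 2, 2, 2, 3), (1, 2, 2, 2, 2, 1, 2, 3, 2), (1, 2, 2, 2, 2, 3, 2, 1, 2), (1, 2, 2, 2, 3, 2, 2, 2, 1), (2, 1, 2, 1, 2, 2, 2, 2, 3), (2, 1, 2, 2, 2, 1, 3, 2, 2), (2, 1, 2, 2, 2, 3, 1, 2, 2), (2, 1, 2, 3, 2, 2, 2, 2, 1), (2, 2, 1, 1, 2, 2, 2, 3, 2), (2, 2, 1, 2, 1, 2, 3, 2, 2), (2, 2, 1, 2, 3, 2, 1, 2, 2), (2, 2, 1, 3, 2, 2, 2, 1, 2), (2, 2, 3, 1, 2, 2, 2, 1, 2), (2, 2, 3, 2, 1, 2, 1, 2, 2), (2, 3, 2, 1, 2, 2, 2, 2, 1), (2, 3, 2, 2, 2, 1, 1, 2, 2), (3, 2, 2, 2, 1, 2, 2, 2, 1), (3, 2, 2, 2, 2, 1, 2, 1, 2)]"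

lemma enum_val: "enum = L18"
  unfolding enum_def okv_def detf_def L18_def by simp

lemma cm: "x \<in> set xs \<Longrightarrow> y \<in> set (f x) \<Longrightarrow> y \<in> set (concat (map f xs))"
  by auto
lemma ci: "P \<Longrightarrow> y \<in> set A \<Longrightarrow> y \<in> set (if P then A else [])"
  by auto

lemma enum_complete:
  assumes "a \<in> set [1,2,3]" "b \<in> set [1,2,3]" "c \<in> set [1,2,3]" "d \<in> set [1,2,3]" "g \<in> set [1,2,3]"
    "e \<in> set [-3,-2,-1,1,2,3]" "f \<in> set [-3,-2,-1,1,2,3]" "h \<in> set [-3,-2,-1,1,2,3]" "i \<in> set [-3,-2,-1,1,2,3]"
    "okv (a*e-b*d)" "okv (a*f-c*d)" "okv (b*f-c*e)" "okv (a*h-b*g)" "okv (d*h-e*g)"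
    "okv (a*i-c*g)" "okv (b*i-c*h)" "okv (d*i-f*g)" "okv (e*i-f*h)"
    "detf a b c d e f g h i = 1 \<or> detf a b c d e f g h i = -1"
  shows "(a,b,c,d,e,f,g,h,i) \<in> set enum"
  unfolding enum_def
  apply (rule cm[where x=a], rule assms)
  apply (rule cm[where x=b], rule assms)
  apply (rule cm[where x=c], rule assms)
  apply (rule cm[where x=d], rule assms)
  apply (rule cm[where x=e], rule assms)
  apply (rule ci, rule assms)
  apply (rule cm[where x=f], rule assms)
  apply (rule ci, rule assms)+
  apply (rule cm[where x=g], rule assms)
  apply (rule cm[where x=h], rule assms)
  apply (rule ci, rule assms)+
  apply (rule cm[where x=i], rule assms)
  apply (rule ci, rule assms)+
  apply simp
  done

definition good :: "int \<Rightarrow> int \<Rightarrow> int \<Rightarrow> int \<Rightarrow> int \<Rightarrow> int \<Rightarrow> int \<Rightarrow> int \<Rightarrow> int \<Rightarrow> bool" where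
  "good a b c d e f g h i \<longleftrightarrow> (detf a b c d e f g h i = 1 \<or> detf a b c d e f g h i = -1) \<and>
     okv a \<and> okv b \<and> okv c \<and> okv d \<and> okv e \<and> okv f \<and> okv g \<and> okv h \<and> okv i \<and>
     okv (e*i-f*h) \<and> okv (c*h-b*i) \<and> okv (b*f-c*e) \<and> okv (f*g-d*i) \<and> okv (a*i-c*g) \<and>
     okv (c*d-a*f) \<and> okv (d*h-e*g) \<and> okv (b*g-a*h) \<and> okv (a*e-b*d)"

lemma setcomp3: "{(F::3\<Rightarrow>3\<Rightarrow>'a) i j | i j. True} = {F 1 1, F 1 2, F 1 3, F 2 1, F 2 2, F 2 3, F 3 1, F 3 2, (F 3 3 :: 'a)}"
  (is "?L = ?R")
proof
  show "?L \<subseteq> ?R"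
  proof
    fix x assume "x \<in> ?L"
    then obtain i j where "x = F i j" by blast
    then show "x \<in> ?R" using exhaust_3[of i] exhaust_3[of j] by auto
  qed
  show "?R \<subseteq> ?L" by blast
qed

lemma abs_sign: "D = 1 \<or> D = -1 \<Longrightarrow> \<bar>D * (x::int)\<bar> = \<bar>x\<bar>"
  by auto

lemma cn_mk:
  assumes "detf a b c d e f g h i = 1 \<or> detf a b c d e f g h i = -1"
  shows "concat_norm (mk a b c d e f g h i) = Max {\<bar>a\<bar>, \<bar>b\<bar>, \<bar>c\<bar>, \<bar>d\<bar>, \<bar>e\<bar>, \<bar>f\<bar>, \<bar>g\<bar>, \<bar>h\<bar>, \<bar>i\<bar>,
     \<bar>e*i-f*h\<bar>, \<bar>c*h-b*i\<bar>, \<bar>b*f-c*e\<bar>, \<bar>f*g-d*i\<bar>, \<bar>a*i-c*g\<bar>,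
     \<bar>c*d-a*f\<bar>, \<bar>d*h-e*g\<bar>, \<bar>b*g-a*h\<bar>, \<bar>a*e-b*d\<bar>}"
  unfolding concat_norm_def inv_mk(1)[OF assms] setcomp3
  apply (simp only: invmk_def mk_nth abs_sign[OF assms])
  apply (rule arg_cong[where f=Max])
  by auto

lemma okv_abs: "okv x \<longleftrightarrow> x \<noteq> 0 \<and> \<bar>x\<bar> \<le> 3"
  unfolding okv_def by auto

lemma char:
  "(unimodular (mk a b c d e f g h i) \<and> zerofree (mk a b c d e f g h i) \<and> concat_norm (mk a b c d e f g h i) \<le> 3)
   \<longleftrightarrow> good a b c d e f g h i"
proof
  assume A: "unimodular (mk a b c d e f g h i) \<and> zerofree (mk a b c d e f g h i) \<and> concat_norm (mk a b c d e f g h i) \<le> 3"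
  then have D: "detf a b c d e f g h i = 1 \<or> detf a b c d e f g h i = -1"
    unfolding unimodular_def det_mk by auto
  have DD: "detf a b c d e f g h i \<noteq> 0" using D by auto
  from A have z: "zerofree (mk a b c d e f g h i)" by auto
  from A have n: "concat_norm (mk a b c d e f g h i) \<le> 3" by auto
  note z = z[unfolded zerofree_def inv_mk(1)[OF D] invmk_def forall_3]
  note n = n[unfolded cn_mk[OF D]]
  have z2: "a \<noteq> 0 \<and> b \<noteq> 0 \<and> c \<noteq> 0 \<and> d \<noteq> 0 \<and> e \<noteq> 0 \<and> f \<noteq> 0 \<and> g \<noteq> 0 \<and> h \<noteq> 0 \<and> i \<noteq> 0 \<and>
     e*i-f*h \<noteq> 0 \<and> c*h-b*i \<noteq> 0 \<and> b*f-c*e \<noteq> 0 \<and> f*g-d*i \<noteq> 0 \<and> a*i-c*g \<noteq> 0 \<and>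
     c*d-a*f \<noteq> 0 \<and> d*h-e*g \<noteq> 0 \<and> b*g-a*h \<noteq> 0 \<and> a*e-b*d \<noteq> 0"
    using z DD by (simp only: mk_nth mult_eq_0_iff de_Morgan_disj simp_thms)
  have n2: "\<bar>a\<bar> \<le> 3 \<and> \<bar>b\<bar> \<le> 3 \<and> \<bar>c\<bar> \<le> 3 \<and> \<bar>d\<bar> \<le> 3 \<and> \<bar>e\<bar> \<le> 3 \<and> \<bar>f\<bar> \<le> 3 \<and> \<bar>g\<bar> \<le> 3 \<and> \<bar>h\<bar> \<le> 3 \<and> \<bar>i\<bar> \<le> 3 \<and>
     \<bar>e*i-f*h\<bar> \<le> 3 \<and> \<bar>c*h-b*i\<bar> \<le> 3 \<and> \<bar>b*f-c*e\<bar> \<le> 3 \<and> \<bar>f*g-d*i\<bar> \<le> 3 \<and> \<bar>a*i-c*g\<bar> \<le> 3 \<and>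
     \<bar>c*d-a*f\<bar> \<le> 3 \<and> \<bar>d*h-e*g\<bar> \<le> 3 \<and> \<bar>b*g-a*h\<bar> \<le> 3 \<and> \<bar>a*e-b*d\<bar> \<le> 3"
    using n by (simp only: Max_le_iff finite_insert finite.emptyI insert_not_empty ball_simps simp_thms)
  show "good a b c d e f g h i"
    using D z2 n2 unfolding good_def okv_abs by (simp only: simp_thms)
next
  assume G: "good a b c d e f g h i"
  then have D: "detf a b c d e f g h i = 1 \<or> detf a b c d e f g h i = -1"
    unfolding good_def by auto
  have DD: "detf a b c d e f g h i \<noteq> 0" using D by auto
  show "unimodular (mk a b c d e f g h i) \<and> zerofree (mk a b c d e f g h i) \<and> concat_norm (mk a b c d e f g h i) \<le> 3"
    unfolding unimodular_def det_mk zerofree_def inv_mk(1)[OF D] invmk_def forall_3 cn_mk[OF D]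
    apply (simp only: Max_le_iff finite_insert finite.emptyI insert_not_empty ball_simps simp_thms
       mk_nth mult_eq_0_iff de_Morgan_disj DD inv_mk(2)[OF D] D)
    using G unfolding good_def okv_abs by (simp only: simp_thms)
qed

lemma okv_sgn: "s = 1 \<or> s = -1 \<Longrightarrow> okv (s*x) = okv x"
  unfolding okv_def by auto

definition SG :: "int set" where "SG = {1,-1}"

lemma good_flip:
  assumes S: "u2 \<in> SG" "u3 \<in> SG" "v1 \<in> SG" "v2 \<in> SG" "v3 \<in> SG"
    and G: "good a b c d e f g h i"
  shows "good (v1*a) (v2*b) (v3*c) (u2 * v1*d) (u2 * v2*e) (u2 * v3*f) (u3 * v1*g) (u3 * v2*h) (u3 * v3*i)"
proof -
  note S = S[unfolded SG_def, simplified]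
  have t0: "v1 = 1 \<or> v1 = -1" using S by auto
  have t1: "v2 = 1 \<or> v2 = -1" using S by auto
  have t2: "v3 = 1 \<or> v3 = -1" using S by auto
  have t3: "u2 * v1 = 1 \<or> u2 * v1 = -1" using S by auto
  have t4: "u2 * v2 = 1 \<or> u2 * v2 = -1" using S by auto
  have t5: "u2 * v3 = 1 \<or> u2 * v3 = -1" using S by auto
  have t6: "u3 * v1 = 1 \<or> u3 * v1 = -1" using S by auto
  have t7: "u3 * v2 = 1 \<or> u3 * v2 = -1" using S by auto
  have t8: "u3 * v3 = 1 \<or> u3 * v3 = -1" using S by auto
  have e0: "(u2 * v2*e)*(u3 * v3*i)-(u2 * v3*f)*(u3 * v2*h) = (u2*u3 * v2 * v3)*(e*i-f*h)" by (simp add: algebra_simps)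
  have s0: "u2*u3 * v2 * v3 = 1 \<or> u2*u3 * v2 * v3 = -1" using S by auto
  have e1: "(v3*c)*(u3 * v2*h)-(v2*b)*(u3 * v3*i) = (u3 * v2 * v3)*(c*h-b*i)" by (simp add: algebra_simps)
  have s1: "u3 * v2 * v3 = 1 \<or> u3 * v2 * v3 = -1" using S by auto
  have e2: "(v2*b)*(u2 * v3*f)-(v3*c)*(u2 * v2*e) = (u2 * v2 * v3)*(b*f-c*e)" by (simp add: algebra_simps)
  have s2: "u2 * v2 * v3 = 1 \<or> u2 * v2 * v3 = -1" using S by auto
  have e3: "(u2 * v3*f)*(u3 * v1*g)-(u2 * v1*d)*(u3 * v3*i) = (u2*u3 * v1 * v3)*(f*g-d*i)" by (simp add: algebra_simps)
  have s3: "u2*u3 * v1 * v3 = 1 \<or> u2*u3 * v1 * v3 = -1" using S by auto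
  have e4: "(v1*a)*(u3 * v3*i)-(v3*c)*(u3 * v1*g) = (u3 * v1 * v3)*(a*i-c*g)" by (simp add: algebra_simps)
  have s4: "u3 * v1 * v3 = 1 \<or> u3 * v1 * v3 = -1" using S by auto
  have e5: "(v3*c)*(u2 * v1*d)-(v1*a)*(u2 * v3*f) = (u2 * v1 * v3)*(c*d-a*f)" by (simp add: algebra_simps)
  have s5: "u2 * v1 * v3 = 1 \<or> u2 * v1 * v3 = -1" using S by auto
  have e6: "(u2 * v1*d)*(u3 * v2*h)-(u2 * v2*e)*(u3 * v1*g) = (u2*u3 * v1 * v2)*(d*h-e*g)" by (simp add: algebra_simps)
  have s6: "u2*u3 * v1 * v2 = 1 \<or> u2*u3 * v1 * v2 = -1" using S by auto
  have e7: "(v2*b)*(u3 * v1*g)-(v1*a)*(u3 * v2*h) = (u3 * v1 * v2)*(b*g-a*h)" by (simp add: algebra_simps)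
  have s7: "u3 * v1 * v2 = 1 \<or> u3 * v1 * v2 = -1" using S by auto
  have e8: "(v1*a)*(u2 * v2*e)-(v2*b)*(u2 * v1*d) = (u2 * v1 * v2)*(a*e-b*d)" by (simp add: algebra_simps)
  have s8: "u2 * v1 * v2 = 1 \<or> u2 * v1 * v2 = -1" using S by auto
  have dt: "detf (v1*a) (v2*b) (v3*c) (u2 * v1*d) (u2 * v2*e) (u2 * v3*f) (u3 * v1*g) (u3 * v2*h) (u3 * v3*i) = (u2*u3 * v1 * v2 * v3) * detf a b c d e f g h i"
    by (simp add: detf_def algebra_simps)
  have ds: "u2*u3 * v1 * v2 * v3 = 1 \<or> u2*u3 * v1 * v2 * v3 = -1" using S by auto
  have dd: "detf (v1*a) (v2*b) (v3*c) (u2 * v1*d) (u2 * v2*e) (u2 * v3*f) (u3 * v1*g) (u3 * v2*h) (u3 * v3*i) = 1 \<or> detf (v1*a) (v2*b) (v3*c) (u2 * v1*d) (u2 * v2*e) (u2 * v3*f) (u3 * v1*g) (u3 * v2*h) (u3 * v3*i) = -1"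
    unfolding dt using ds G unfolding good_def by auto
  show ?thesis
    unfolding good_def e0 e1 e2 e3 e4 e5 e6 e7 e8
    unfolding okv_sgn[OF s0] okv_sgn[OF s1] okv_sgn[OF s2] okv_sgn[OF s3] okv_sgn[OF s4] okv_sgn[OF s5] okv_sgn[OF s6] okv_sgn[OF s7] okv_sgn[OF s8] okv_sgn[OF t0] okv_sgn[OF t1] okv_sgn[OF t2] okv_sgn[OF t3] okv_sgn[OF t4] okv_sgn[OF t5] okv_sgn[OF t6] okv_sgn[OF t7] okv_sgn[OF t8]
    using G dd unfolding good_def by blast
qed

definition phi :: "(int\<times>int\<times>int\<times>int\<times>int\<times>int\<times>int\<times>int\<times>int) \<times> (int\<times>int) \<times> (int\<times>int\<times>int) \<Rightarrow> int^3^3" where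
  "phi = (\<lambda>((a,b,c,d,e,f,g,h,i),(u2,u3),(v1,v2,v3)).
     mk (v1 * a) (v2 * b) (v3 * c) (u2 * v1 * d) (u2 * v2 * e) (u2 * v3 * f) (u3 * v1 * g) (u3 * v2 * h) (u3 * v3 * i))"

lemma L18_props: "(a,b,c,d,e,f,g,h,i) \<in> set L18 \<Longrightarrow> good a b c d e f g h i \<and>
   a > 0 \<and> b > 0 \<and> c > 0 \<and> d > 0 \<and> e > 0 \<and> f > 0 \<and> g > 0 \<and> h > 0 \<and> i > 0 \<and>
   (a = 3 \<or> b = 3 \<or> c = 3 \<or> d = 3 \<or> e = 3 \<or> f = 3 \<or> g = 3 \<or> h = 3 \<or> i = 3)"
  unfolding L18_def good_def okv_def detf_def by (simp, elim disjE; simp)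

lemma cn_ge: "\<bar>(M::int^3^3) $ i $ j\<bar> \<le> concat_norm M"
proof -
  have fin: "finite ({\<bar>M $ i $ j\<bar> | i j. True} \<union> {\<bar>matrix_inv M $ i $ j\<bar> | i j. True})"
    unfolding setcomp3[of "\<lambda>i j. \<bar>M $ i $ j\<bar>"] setcomp3[of "\<lambda>i j. \<bar>matrix_inv M $ i $ j\<bar>"] by simp
  show ?thesis unfolding concat_norm_def by (rule Max_ge[OF fin]) blast
qed

lemma mk_good_eq:
  "good a b c d e f g h i \<Longrightarrow> unimodular (mk a b c d e f g h i) \<and> zerofree (mk a b c d e f g h i) \<and> concat_norm (mk a b c d e f g h i) \<le> 3"
  using char by blast

lemma okv_swap: "okv (x - y) = okv (y - x)"
  unfolding okv_def by auto

lemma okv_pos: "okv x \<Longrightarrow> x > 0 \<Longrightarrow> x \<in> set [1,2,3]"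
  unfolding okv_def by auto

lemma okv_any: "okv x \<Longrightarrow> x \<in> set [-3,-2,-1,1,2,3]"
  unfolding okv_def by auto

lemma good_in_L18:
  assumes G: "good a b c d e f g h i" and P: "a > 0" "b > 0" "c > 0" "d > 0" "g > 0"
  shows "(a,b,c,d,e,f,g,h,i) \<in> set L18"
proof -
  note G' = G[unfolded good_def]
  show ?thesis
    unfolding enum_val[symmetric]
    apply (rule enum_complete)
    using G' P okv_pos[of a] okv_pos[of b] okv_pos[of c] okv_pos[of d] okv_pos[of g]
      okv_any[of e] okv_any[of f] okv_any[of h] okv_any[of i]
      okv_swap[of "a*f" "c*d"] okv_swap[of "a*h" "b*g"] okv_swap[of "b*i" "c*h"] okv_swap[of "d*i" "f*g"]
    by simp_all
qed

lemma sgn_SG: "(x::int) \<noteq> 0 \<Longrightarrow> sgn x \<in> SG"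
  unfolding SG_def by (auto simp: sgn_if)

lemma sgn_sq: "(x::int) \<noteq> 0 \<Longrightarrow> sgn x * sgn x = 1"
  by (auto simp: sgn_if)

lemma sgn_pos: "(x::int) \<noteq> 0 \<Longrightarrow> sgn x * x > 0"
  by (auto simp: sgn_if)

lemma S_sub:
  assumes "unimodular M" "zerofree M" "concat_norm M \<le> 3"
  shows "M \<in> phi ` (set L18 \<times> (SG \<times> SG) \<times> (SG \<times> SG \<times> SG))"
proof -
  define a b c d e f g h i where "a = M$1$1" "b = M$1$2" "c = M$1$3" "d = M$2$1" "e = M$2$2" "f = M$2$3"
    "g = M$3$1" "h = M$3$2" "i = M$3$3"
  have M: "M = mk a b c d e f g h i" unfolding a_b_c_d_e_f_g_h_i_def by (rule mk_eta)
  have G: "good a b c d e f g h i" using assms char unfolding M by blast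
  then have nz: "a \<noteq> 0" "b \<noteq> 0" "c \<noteq> 0" "d \<noteq> 0" "e \<noteq> 0" "f \<noteq> 0" "g \<noteq> 0" "h \<noteq> 0" "i \<noteq> 0"
    unfolding good_def okv_def by auto
  define v1 v2 v3 u2 u3 where "v1 = sgn a" "v2 = sgn b" "v3 = sgn c" "u2 = sgn a * sgn d" "u3 = sgn a * sgn g"
  have S: "u2 \<in> SG" "u3 \<in> SG" "v1 \<in> SG" "v2 \<in> SG" "v3 \<in> SG"
    unfolding v1_v2_v3_u2_u3_def SG_def using nz by (auto simp: sgn_if)
  have sq: "v1 * v1 = 1" "v2 * v2 = 1" "v3 * v3 = 1" "u2 * u2 = 1" "u3 * u3 = 1"
    using S unfolding SG_def by auto
  have GN: "good (v1 * a) (v2 * b) (v3 * c) (u2 * v1 * d) (u2 * v2 * e) (u2 * v3 * f) (u3 * v1 * g) (u3 * v2 * h) (u3 * v3 * i)"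
    by (rule good_flip[OF S G])
  have pos: "v1 * a > 0" "v2 * b > 0" "v3 * c > 0" "u2 * v1 * d > 0" "u3 * v1 * g > 0"
    unfolding v1_v2_v3_u2_u3_def using nz sgn_pos sgn_sq
    by (auto simp: mult.assoc mult.left_commute[of "sgn a"])
  have N: "(v1 * a, v2 * b, v3 * c, u2 * v1 * d, u2 * v2 * e, u2 * v3 * f, u3 * v1 * g, u3 * v2 * h, u3 * v3 * i) \<in> set L18"
    using good_in_L18[OF GN pos] .
  have "M = phi ((v1 * a, v2 * b, v3 * c, u2 * v1 * d, u2 * v2 * e, u2 * v3 * f, u3 * v1 * g, u3 * v2 * h, u3 * v3 * i), (u2, u3), (v1, v2, v3))"
    unfolding M phi_def mk_eq_iff using sq by (simp add: algebra_simps)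
  then show ?thesis using N S by blast
qed

lemma S_sup:
  assumes "x \<in> set L18 \<times> (SG \<times> SG) \<times> (SG \<times> SG \<times> SG)"
  shows "unimodular (phi x) \<and> zerofree (phi x) \<and> concat_norm (phi x) = 3"
proof -
  obtain a b c d e f g h i u2 u3 v1 v2 v3 where x: "x = ((a,b,c,d,e,f,g,h,i),(u2,u3),(v1,v2,v3))"
    by (cases x) auto
  have N: "(a,b,c,d,e,f,g,h,i) \<in> set L18" and S: "u2 \<in> SG" "u3 \<in> SG" "v1 \<in> SG" "v2 \<in> SG" "v3 \<in> SG"
    using assms x by auto
  note P = L18_props[OF N]
  have GN: "good (v1 * a) (v2 * b) (v3 * c) (u2 * v1 * d) (u2 * v2 * e) (u2 * v3 * f) (u3 * v1 * g) (u3 * v2 * h) (u3 * v3 * i)"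
    using good_flip[OF S] P by blast
  have px: "phi x = mk (v1 * a) (v2 * b) (v3 * c) (u2 * v1 * d) (u2 * v2 * e) (u2 * v3 * f) (u3 * v1 * g) (u3 * v2 * h) (u3 * v3 * i)"
    unfolding x phi_def by simp
  have A: "unimodular (phi x) \<and> zerofree (phi x) \<and> concat_norm (phi x) \<le> 3"
    unfolding px using mk_good_eq[OF GN] .
  have ab: "\<bar>s * y\<bar> = y" if "s \<in> SG" "y > 0" for s y :: int
    using that unfolding SG_def by auto
  have P9: "a = 3 \<or> b = 3 \<or> c = 3 \<or> d = 3 \<or> e = 3 \<or> f = 3 \<or> g = 3 \<or> h = 3 \<or> i = 3"
    and pos: "a > 0" "b > 0" "c > 0" "d > 0" "e > 0" "f > 0" "g > 0" "h > 0" "i > 0" using P by blast+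
  have SS: "u2 * v1 \<in> SG" "u2 * v2 \<in> SG" "u2 * v3 \<in> SG" "u3 * v1 \<in> SG" "u3 * v2 \<in> SG" "u3 * v3 \<in> SG"
    using S unfolding SG_def by auto
  have E: "\<bar>phi x $ 1 $ 1\<bar> = a" "\<bar>phi x $ 1 $ 2\<bar> = b" "\<bar>phi x $ 1 $ 3\<bar> = c"
     "\<bar>phi x $ 2 $ 1\<bar> = d" "\<bar>phi x $ 2 $ 2\<bar> = e" "\<bar>phi x $ 2 $ 3\<bar> = f"
     "\<bar>phi x $ 3 $ 1\<bar> = g" "\<bar>phi x $ 3 $ 2\<bar> = h" "\<bar>phi x $ 3 $ 3\<bar> = i"
    unfolding px mk_nth
    by (rule ab, fact, fact)+
  have "\<exists>k l. \<bar>phi x $ k $ l\<bar> = 3"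
    using P9
  proof (elim disjE)
  qed (use E in blast)+
  then have "3 \<le> concat_norm (phi x)" using cn_ge by metis
  then show ?thesis using A by auto
qed

lemma SG_mult: "s \<in> SG \<Longrightarrow> t \<in> SG \<Longrightarrow> s * t \<in> SG"
  unfolding SG_def by auto

lemma card_SG: "card SG = 2" unfolding SG_def by simp

lemma sc: "s \<in> SG \<Longrightarrow> s' \<in> SG \<Longrightarrow> (x::int) > 0 \<Longrightarrow> x' > 0 \<Longrightarrow> s * x = s' * x' \<Longrightarrow> s = s' \<and> x = x'"
  unfolding SG_def by auto

lemma phi_inj: "inj_on phi (set L18 \<times> (SG \<times> SG) \<times> (SG \<times> SG \<times> SG))"
proof (rule inj_onI)
  fix x y assume x: "x \<in> set L18 \<times> (SG \<times> SG) \<times> (SG \<times> SG \<times> SG)" and y: "y \<in> set L18 \<times> (SG \<times> SG) \<times> (SG \<times> SG \<times> SG)"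
    and e: "phi x = phi y"
  obtain a b c d e f g h i u2 u3 v1 v2 v3 where xx: "x = ((a,b,c,d,e,f,g,h,i),(u2,u3),(v1,v2,v3))"
    by (cases x) auto
  obtain a' b' c' d' e' f' g' h' i' u2' u3' v1' v2' v3' where yy: "y = ((a',b',c',d',e',f',g',h',i'),(u2',u3'),(v1',v2',v3'))"
    by (cases y) auto
  have N: "(a,b,c,d,e,f,g,h,i) \<in> set L18" and S: "u2 \<in> SG" "u3 \<in> SG" "v1 \<in> SG" "v2 \<in> SG" "v3 \<in> SG"
    using x xx by auto
  have N': "(a',b',c',d',e',f',g',h',i') \<in> set L18" and S': "u2' \<in> SG" "u3' \<in> SG" "v1' \<in> SG" "v2' \<in> SG" "v3' \<in> SG"
    using y yy by auto
  note P = L18_props[OF N] and P' = L18_props[OF N']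
  have E: "v1 * a = v1' * a'" "v2 * b = v2' * b'" "v3 * c = v3' * c'"
    "(u2 * v1) * d = (u2' * v1') * d'" "(u2 * v2) * e = (u2' * v2') * e'" "(u2 * v3) * f = (u2' * v3') * f'"
    "(u3 * v1) * g = (u3' * v1') * g'" "(u3 * v2) * h = (u3' * v2') * h'" "(u3 * v3) * i = (u3' * v3') * i'"
    using e unfolding xx yy phi_def by (simp_all add: mk_eq_iff)
  have r1: "v1 = v1' \<and> a = a'" by (rule sc[OF S(3) S'(3) _ _ E(1)]) (use P P' in auto)
  have r2: "v2 = v2' \<and> b = b'" by (rule sc[OF S(4) S'(4) _ _ E(2)]) (use P P' in auto)
  have r3: "v3 = v3' \<and> c = c'" by (rule sc[OF S(5) S'(5) _ _ E(3)]) (use P P' in auto)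
  have r4: "u2 * v1 = u2' * v1' \<and> d = d'" by (rule sc[OF SG_mult SG_mult _ _ E(4)]) (use P P' S S' in auto)
  have r5: "u2 * v2 = u2' * v2' \<and> e = e'" by (rule sc[OF SG_mult SG_mult _ _ E(5)]) (use P P' S S' in auto)
  have r6: "u2 * v3 = u2' * v3' \<and> f = f'" by (rule sc[OF SG_mult SG_mult _ _ E(6)]) (use P P' S S' in auto)
  have r7: "u3 * v1 = u3' * v1' \<and> g = g'" by (rule sc[OF SG_mult SG_mult _ _ E(7)]) (use P P' S S' in auto)
  have r8: "u3 * v2 = u3' * v2' \<and> h = h'" by (rule sc[OF SG_mult SG_mult _ _ E(8)]) (use P P' S S' in auto)
  have r9: "u3 * v3 = u3' * v3' \<and> i = i'" by (rule sc[OF SG_mult SG_mult _ _ E(9)]) (use P P' S S' in auto)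
  have v1nz: "v1 \<noteq> 0" using S unfolding SG_def by auto
  have "u2 = u2'" "u3 = u3'" using r1 r4 r7 v1nz by auto
  then show "x = y" unfolding xx yy using r1 r2 r3 r4 r5 r6 r7 r8 r9 by auto
qed

lemma distinct_L18: "distinct L18" unfolding L18_def by simp

lemma card_dom: "card (set L18 \<times> (SG \<times> SG) \<times> (SG \<times> SG \<times> SG)) = 576"
  by (simp add: card_cartesian_product card_SG distinct_card[OF distinct_L18], simp add: L18_def)

lemma S_eq: "{M::int^3^3. unimodular M \<and> zerofree M \<and> concat_norm M = 3} = phi ` (set L18 \<times> (SG \<times> SG) \<times> (SG \<times> SG \<times> SG))"
proof
  show "{M::int^3^3. unimodular M \<and> zerofree M \<and> concat_norm M = 3} \<subseteq> phi ` (set L18 \<times> (SG \<times> SG) \<times> (SG \<times> SG \<times> SG))"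
    using S_sub by auto
  show "phi ` (set L18 \<times> (SG \<times> SG) \<times> (SG \<times> SG \<times> SG)) \<subseteq> {M::int^3^3. unimodular M \<and> zerofree M \<and> concat_norm M = 3}"
    using S_sup by auto
qed

lemma card_S: "card {M::int^3^3. unimodular M \<and> zerofree M \<and> concat_norm M = 3} = 576"
  unfolding S_eq card_image[OF phi_inj] card_dom ..

lemma lower: "unimodular (M::int^3^3) \<and> zerofree M \<longrightarrow> 3 \<le> concat_norm M"
proof (intro impI, rule ccontr)
  assume A: "unimodular M \<and> zerofree M" and B: "\<not> 3 \<le> concat_norm M"
  then have C: "concat_norm M \<le> 3" by auto
  have "M \<in> phi ` (set L18 \<times> (SG \<times> SG) \<times> (SG \<times> SG \<times> SG))"
    using A C by (intro S_sub) auto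
  then obtain x where x: "M = phi x" "x \<in> set L18 \<times> (SG \<times> SG) \<times> (SG \<times> SG \<times> SG)"
    by (rule imageE)
  have "concat_norm (phi x) = 3" using S_sup[OF x(2)] by (rule conjunct2[OF conjunct2])
  then show False using B unfolding x(1) by simp
qed

lemma M0_mk: "M0 = mk 1 2 2 2 1 2 2 2 3" unfolding M0_def mk_def ..

lemma M0inv_mk: "M0inv = mk 1 2 (-2) 2 1 (-2) (-2) (-2) 3" unfolding M0inv_def mk_def ..

lemma M0_phi: "M0 = phi ((1,2,2,2,1,2,2,2,3),(1,1),(1,1,1))"
  unfolding M0_mk phi_def by simp

lemma M0_props: "unimodular M0 \<and> zerofree M0 \<and> concat_norm M0 = 3"
  unfolding M0_phi by (rule S_sup) (simp add: L18_def SG_def)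

lemma M0_inv: "matrix_inv M0 = M0inv"
proof -
  have d: "detf 1 2 2 2 1 2 2 2 3 = 1 \<or> detf 1 2 2 2 1 2 2 2 3 = -1" by (simp add: detf_def)
  show ?thesis unfolding M0_mk M0inv_mk inv_mk(1)[OF d] invmk_def by (simp add: detf_def mk_eq_iff)
qed

definition perm3 :: "(3 \<Rightarrow> 3) \<Rightarrow> int^3^3" where
  "perm3 p = (\<chi> i j. if j = p i then 1 else 0)"

lemma perm3_mk: "perm3 p = mk (if 1 = p 1 then 1 else 0) (if 2 = p 1 then 1 else 0) (if 3 = p 1 then 1 else 0)
   (if 1 = p 2 then 1 else 0) (if 2 = p 2 then 1 else 0) (if 3 = p 2 then 1 else 0)
   (if 1 = p 3 then 1 else 0) (if 2 = p 3 then 1 else 0) (if 3 = p 3 then 1 else 0)"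
  by (simp add: vec_eq_iff forall_3 perm3_def)

lemma spm_perm3: "inj p \<Longrightarrow> signed_perm_matrix (perm3 p)"
  unfolding signed_perm_matrix_def perm3_def
  apply (rule exI[of _ p], rule exI[of _ "\<lambda>_. 1"])
  using finite_UNIV_inj_surj[of p] by (auto simp: bij_def)

lemma spm_diag: "u1 \<in> SG \<Longrightarrow> u2 \<in> SG \<Longrightarrow> u3 \<in> SG \<Longrightarrow> signed_perm_matrix (mk u1 0 0 0 u2 0 0 0 u3)"
  unfolding signed_perm_matrix_def
  apply (rule exI[of _ id], rule exI[of _ "\<lambda>i. mk u1 0 0 0 u2 0 0 0 u3 $ i $ i"])
  by (auto simp: forall_3 SG_def)

lemma spm_mult:
  fixes P Q :: "'a::ring_1^'n^'n"
  assumes "signed_perm_matrix P" "signed_perm_matrix Q"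
  shows "signed_perm_matrix (P ** Q)"
proof -
  obtain p s where p: "bij p" "\<forall>i. s i = 1 \<or> s i = -1" "\<forall>i j. P $ i $ j = (if j = p i then s i else 0)"
    using assms(1) unfolding signed_perm_matrix_def by blast
  obtain q t where q: "bij q" "\<forall>i. t i = 1 \<or> t i = -1" "\<forall>i j. Q $ i $ j = (if j = q i then t i else 0)"
    using assms(2) unfolding signed_perm_matrix_def by blast
  have "(P ** Q) $ i $ j = (if j = (q \<circ> p) i then s i * t (p i) else 0)" for i j
  proof -
    have "(P ** Q) $ i $ j = (\<Sum>k\<in>UNIV. P $ i $ k * Q $ k $ j)"
      unfolding matrix_matrix_mult_def by simp
    also have "\<dots> = (\<Sum>k\<in>UNIV. (if k = p i then s i * Q $ k $ j else 0))"
      by (rule sum.cong) (auto simp: p(3)[rule_format])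
    also have "\<dots> = s i * Q $ p i $ j" by (simp add: sum.delta')
    finally show ?thesis using q(3) by simp
  qed
  moreover have "bij (q \<circ> p)" using p(1) q(1) by (rule bij_comp)
  moreover have "\<forall>i. s i * t (p i) = 1 \<or> s i * t (p i) = -1" using p(2) q(2) by (metis mult_1 mult_minus1 minus_minus)
  ultimately show ?thesis unfolding signed_perm_matrix_def
    by (intro exI[of _ "q \<circ> p"] exI[of _ "\<lambda>i. s i * t (p i)"]) simp
qed

lemma L18_equiv:
  assumes "N \<in> set L18"
  shows "\<exists>p q. inj p \<and> inj q \<and> M0 = perm3 p ** (case N of (a,b,c,d,e,f,g,h,i) \<Rightarrow> mk a b c d e f g h i) ** perm3 q"
proof -
  have c0: "M0 = perm3 (\<lambda>i::3. if i = 1 then 1 else if i = 2 then 2 else (3::3)) ** mk 1 2 2 2 1 2 2 2 3 ** perm3 (\<lambda>i::3. if i = 1 then 1 else if i = 2 then 2 else (3::3))"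
    by (simp add: M0_mk perm3_mk mk_mult)
  have i0: "inj (\<lambda>i::3. if i = 1 then 1 else if i = 2 then 2 else (3::3))" "inj (\<lambda>i::3. if i = 1 then 1 else if i = 2 then 2 else (3::3))" by (simp_all add: inj_def forall_3)
  have C0: ?thesis if "N = (1, 2, 2, 2, 1, 2, 2, 2, 3)" unfolding that prod.case using c0 i0 by blast
  have c1: "M0 = perm3 (\<lambda>i::3. if i = 1 then 1 else if i = 2 then 2 else (3::3)) ** mk 1 2 2 2 2 1 2 3 2 ** perm3 (\<lambda>i::3. if i = 1 then 1 else if i = 2 then 3 else (2::3))"
    by (simp add: M0_mk perm3_mk mk_mult)
  have i1: "inj (\<lambda>i::3. if i = 1 then 1 else if i = 2 then 2 else (3::3))" "inj (\<lambda>i::3. if i = 1 then 1 else if i = 2 then 3 else (2::3))" by (simp_all add: inj_def forall_3)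
  have C1: ?thesis if "N = (1, 2, 2, 2, 2, 1, 2, 3, 2)" unfolding that prod.case using c1 i1 by blast
  have c2: "M0 = perm3 (\<lambda>i::3. if i = 1 then 1 else if i = 2 then 3 else (2::3)) ** mk 1 2 2 2 2 3 2 1 2 ** perm3 (\<lambda>i::3. if i = 1 then 1 else if i = 2 then 2 else (3::3))"
    by (simp add: M0_mk perm3_mk mk_mult)
  have i2: "inj (\<lambda>i::3. if i = 1 then 1 else if i = 2 then 3 else (2::3))" "inj (\<lambda>i::3. if i = 1 then 1 else if i = 2 then 2 else (3::3))" by (simp_all add: inj_def forall_3)
  have C2: ?thesis if "N = (1, 2, 2, 2, 2, 3, 2, 1, 2)" unfolding that prod.case using c2 i2 by blast
  have c3: "M0 = perm3 (\<lambda>i::3. if i = 1 then 1 else if i = 2 then 3 else (2::3)) ** mk 1 2 2 2 3 2 2 2 1 ** perm3 (\<lambda>i::3. if i = 1 then 1 else if i = 2 then 3 else (2::3))"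
    by (simp add: M0_mk perm3_mk mk_mult)
  have i3: "inj (\<lambda>i::3. if i = 1 then 1 else if i = 2 then 3 else (2::3))" "inj (\<lambda>i::3. if i = 1 then 1 else if i = 2 then 3 else (2::3))" by (simp_all add: inj_def forall_3)
  have C3: ?thesis if "N = (1, 2, 2, 2, 3, 2, 2, 2, 1)" unfolding that prod.case using c3 i3 by blast
  have c4: "M0 = perm3 (\<lambda>i::3. if i = 1 then 1 else if i = 2 then 2 else (3::3)) ** mk 2 1 2 1 2 2 2 2 3 ** perm3 (\<lambda>i::3. if i = 1 then 2 else if i = 2 then 1 else (3::3))"
    by (simp add: M0_mk perm3_mk mk_mult)
  have i4: "inj (\<lambda>i::3. if i = 1 then 1 else if i = 2 then 2 else (3::3))" "inj (\<lambda>i::3. if i = 1 then 2 else if i = 2 then 1 else (3::3))" by (simp_all add: inj_def forall_3)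
  have C4: ?thesis if "N = (2, 1, 2, 1, 2, 2, 2, 2, 3)" unfolding that prod.case using c4 i4 by blast
  have c5: "M0 = perm3 (\<lambda>i::3. if i = 1 then 1 else if i = 2 then 2 else (3::3)) ** mk 2 1 2 2 2 1 3 2 2 ** perm3 (\<lambda>i::3. if i = 1 then 3 else if i = 2 then 1 else (2::3))"
    by (simp add: M0_mk perm3_mk mk_mult)
  have i5: "inj (\<lambda>i::3. if i = 1 then 1 else if i = 2 then 2 else (3::3))" "inj (\<lambda>i::3. if i = 1 then 3 else if i = 2 then 1 else (2::3))" by (simp_all add: inj_def forall_3)
  have C5: ?thesis if "N = (2, 1, 2, 2, 2, 1, 3, 2, 2)" unfolding that prod.case using c5 i5 by blast
  have c6: "M0 = perm3 (\<lambda>i::3. if i = 1 then 1 else if i = 2 then 3 else (2::3)) ** mk 2 1 2 2 2 3 1 2 2 ** perm3 (\<lambda>i::3. if i = 1 then 2 else if i = 2 then 1 else (3::3))"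
    by (simp add: M0_mk perm3_mk mk_mult)
  have i6: "inj (\<lambda>i::3. if i = 1 then 1 else if i = 2 then 3 else (2::3))" "inj (\<lambda>i::3. if i = 1 then 2 else if i = 2 then 1 else (3::3))" by (simp_all add: inj_def forall_3)
  have C6: ?thesis if "N = (2, 1, 2, 2, 2, 3, 1, 2, 2)" unfolding that prod.case using c6 i6 by blast
  have c7: "M0 = perm3 (\<lambda>i::3. if i = 1 then 1 else if i = 2 then 3 else (2::3)) ** mk 2 1 2 3 2 2 2 2 1 ** perm3 (\<lambda>i::3. if i = 1 then 3 else if i = 2 then 1 else (2::3))"
    by (simp add: M0_mk perm3_mk mk_mult)
  have i7: "inj (\<lambda>i::3. if i = 1 then 1 else if i = 2 then 3 else (2::3))" "inj (\<lambda>i::3. if i = 1 then 3 else if i = 2 then 1 else (2::3))" by (simp_all add: inj_def forall_3)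
  have C7: ?thesis if "N = (2, 1, 2, 3, 2, 2, 2, 2, 1)" unfolding that prod.case using c7 i7 by blast
  have c8: "M0 = perm3 (\<lambda>i::3. if i = 1 then 1 else if i = 2 then 2 else (3::3)) ** mk 2 2 1 1 2 2 2 3 2 ** perm3 (\<lambda>i::3. if i = 1 then 2 else if i = 2 then 3 else (1::3))"
    by (simp add: M0_mk perm3_mk mk_mult)
  have i8: "inj (\<lambda>i::3. if i = 1 then 1 else if i = 2 then 2 else (3::3))" "inj (\<lambda>i::3. if i = 1 then 2 else if i = 2 then 3 else (1::3))" by (simp_all add: inj_def forall_3)
  have C8: ?thesis if "N = (2, 2, 1, 1, 2, 2, 2, 3, 2)" unfolding that prod.case using c8 i8 by blast
  have c9: "M0 = perm3 (\<lambda>i::3. if i = 1 then 1 else if i = 2 then 2 else (3::3)) ** mk 2 2 1 2 1 2 3 2 2 ** perm3 (\<lambda>i::3. if i = 1 then 3 else if i = 2 then 2 else (1::3))"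
    by (simp add: M0_mk perm3_mk mk_mult)
  have i9: "inj (\<lambda>i::3. if i = 1 then 1 else if i = 2 then 2 else (3::3))" "inj (\<lambda>i::3. if i = 1 then 3 else if i = 2 then 2 else (1::3))" by (simp_all add: inj_def forall_3)
  have C9: ?thesis if "N = (2, 2, 1, 2, 1, 2, 3, 2, 2)" unfolding that prod.case using c9 i9 by blast
  have c10: "M0 = perm3 (\<lambda>i::3. if i = 1 then 1 else if i = 2 then 3 else (2::3)) ** mk 2 2 1 2 3 2 1 2 2 ** perm3 (\<lambda>i::3. if i = 1 then 2 else if i = 2 then 3 else (1::3))"
    by (simp add: M0_mk perm3_mk mk_mult)
  have i10: "inj (\<lambda>i::3. if i = 1 then 1 else if i = 2 then 3 else (2::3))" "inj (\<lambda>i::3. if i = 1 then 2 else if i = 2 then 3 else (1::3))" by (simp_all add: inj_def forall_3)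
  have C10: ?thesis if "N = (2, 2, 1, 2, 3, 2, 1, 2, 2)" unfolding that prod.case using c10 i10 by blast
  have c11: "M0 = perm3 (\<lambda>i::3. if i = 1 then 1 else if i = 2 then 3 else (2::3)) ** mk 2 2 1 3 2 2 2 1 2 ** perm3 (\<lambda>i::3. if i = 1 then 3 else if i = 2 then 2 else (1::3))"
    by (simp add: M0_mk perm3_mk mk_mult)
  have i11: "inj (\<lambda>i::3. if i = 1 then 1 else if i = 2 then 3 else (2::3))" "inj (\<lambda>i::3. if i = 1 then 3 else if i = 2 then 2 else (1::3))" by (simp_all add: inj_def forall_3)
  have C11: ?thesis if "N = (2, 2, 1, 3, 2, 2, 2, 1, 2)" unfolding that prod.case using c11 i11 by blast
  have c12: "M0 = perm3 (\<lambda>i::3. if i = 1 then 2 else if i = 2 then 3 else (1::3)) ** mk 2 2 3 1 2 2 2 1 2 ** perm3 (\<lambda>i::3. if i = 1 then 1 else if i = 2 then 2 else (3::3))"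
    by (simp add: M0_mk perm3_mk mk_mult)
  have i12: "inj (\<lambda>i::3. if i = 1 then 2 else if i = 2 then 3 else (1::3))" "inj (\<lambda>i::3. if i = 1 then 1 else if i = 2 then 2 else (3::3))" by (simp_all add: inj_def forall_3)
  have C12: ?thesis if "N = (2, 2, 3, 1, 2, 2, 2, 1, 2)" unfolding that prod.case using c12 i12 by blast
  have c13: "M0 = perm3 (\<lambda>i::3. if i = 1 then 2 else if i = 2 then 3 else (1::3)) ** mk 2 2 3 2 1 2 1 2 2 ** perm3 (\<lambda>i::3. if i = 1 then 2 else if i = 2 then 1 else (3::3))"
    by (simp add: M0_mk perm3_mk mk_mult)
  have i13: "inj (\<lambda>i::3. if i = 1 then 2 else if i = 2 then 3 else (1::3))" "inj (\<lambda>i::3. if i = 1 then 2 else if i = 2 then 1 else (3::3))" by (simp_all add: inj_def forall_3)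
  have C13: ?thesis if "N = (2, 2, 3, 2, 1, 2, 1, 2, 2)" unfolding that prod.case using c13 i13 by blast
  have c14: "M0 = perm3 (\<lambda>i::3. if i = 1 then 2 else if i = 2 then 3 else (1::3)) ** mk 2 3 2 1 2 2 2 2 1 ** perm3 (\<lambda>i::3. if i = 1 then 1 else if i = 2 then 3 else (2::3))"
    by (simp add: M0_mk perm3_mk mk_mult)
  have i14: "inj (\<lambda>i::3. if i = 1 then 2 else if i = 2 then 3 else (1::3))" "inj (\<lambda>i::3. if i = 1 then 1 else if i = 2 then 3 else (2::3))" by (simp_all add: inj_def forall_3)
  have C14: ?thesis if "N = (2, 3, 2, 1, 2, 2, 2, 2, 1)" unfolding that prod.case using c14 i14 by blast
  have c15: "M0 = perm3 (\<lambda>i::3. if i = 1 then 2 else if i = 2 then 3 else (1::3)) ** mk 2 3 2 2 2 1 1 2 2 ** perm3 (\<lambda>i::3. if i = 1 then 2 else if i = 2 then 3 else (1::3))"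
    by (simp add: M0_mk perm3_mk mk_mult)
  have i15: "inj (\<lambda>i::3. if i = 1 then 2 else if i = 2 then 3 else (1::3))" "inj (\<lambda>i::3. if i = 1 then 2 else if i = 2 then 3 else (1::3))" by (simp_all add: inj_def forall_3)
  have C15: ?thesis if "N = (2, 3, 2, 2, 2, 1, 1, 2, 2)" unfolding that prod.case using c15 i15 by blast
  have c16: "M0 = perm3 (\<lambda>i::3. if i = 1 then 2 else if i = 2 then 3 else (1::3)) ** mk 3 2 2 2 1 2 2 2 1 ** perm3 (\<lambda>i::3. if i = 1 then 3 else if i = 2 then 1 else (2::3))"
    by (simp add: M0_mk perm3_mk mk_mult)
  have i16: "inj (\<lambda>i::3. if i = 1 then 2 else if i = 2 then 3 else (1::3))" "inj (\<lambda>i::3. if i = 1 then 3 else if i = 2 then 1 else (2::3))" by (simp_all add: inj_def forall_3)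
  have C16: ?thesis if "N = (3, 2, 2, 2, 1, 2, 2, 2, 1)" unfolding that prod.case using c16 i16 by blast
  have c17: "M0 = perm3 (\<lambda>i::3. if i = 1 then 2 else if i = 2 then 3 else (1::3)) ** mk 3 2 2 2 2 1 2 1 2 ** perm3 (\<lambda>i::3. if i = 1 then 3 else if i = 2 then 2 else (1::3))"
    by (simp add: M0_mk perm3_mk mk_mult)
  have i17: "inj (\<lambda>i::3. if i = 1 then 2 else if i = 2 then 3 else (1::3))" "inj (\<lambda>i::3. if i = 1 then 3 else if i = 2 then 2 else (1::3))" by (simp_all add: inj_def forall_3)
  have C17: ?thesis if "N = (3, 2, 2, 2, 2, 1, 2, 1, 2)" unfolding that prod.case using c17 i17 by blast
  have "N = (1, 2, 2, 2, 1, 2, 2, 2, 3) \<or> N = (1, 2, 2, 2, 2, 1, 2, 3, 2) \<or> N = (1, 2, 2, 2, 2, 3, 2, 1, 2) \<or> N = (1, 2, 2, 2, 3, 2, 2, 2, 1) \<or> N = (2, 1, 2, 1, 2, 2, 2, 2, 3) \<or> N = (2, 1, 2, 2, 2, 1, 3, 2, 2) \<or> N = (2, 1, 2, 2, 2, 3, 1, 2, 2) \<or> N = (2, 1, 2, 3, 2, 2, 2, 2, 1) \<or> N = (2, 2, 1, 1, 2, 2, 2, 3, 2) \<or> N = (2, 2, 1, 2, 1, 2, 3, 2, 2) \<or> N = (2, 2, 1, 2, 3, 2, 1, 2, 2) \<or> N = (2, 2, 1, 3, 2, 2, 2, 1, 2) \<or> N = (2, 2, 3, 1, 2, 2, 2,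 1, 2) \<or> N = (2, 2, 3, 2, 1, 2, 1, 2, 2) \<or> N = (2, 3, 2, 1, 2, 2, 2, 2, 1) \<or> N = (2, 3, 2, 2, 2, 1, 1, 2, 2) \<or> N = (3, 2, 2, 2, 1, 2, 2, 2, 1) \<or> N = (3, 2, 2, 2, 2, 1, 2, 1, 2)"
    using assms unfolding L18_def by simp
  then show ?thesis
    by (elim disjE) ((rule C0, assumption) | (rule C1, assumption) | (rule C2, assumption) | (rule C3, assumption) | (rule C4, assumption) | (rule C5, assumption) | (rule C6, assumption) | (rule C7, assumption) | (rule C8, assumption) | (rule C9, assumption) | (rule C10, assumption) | (rule C11, assumption) | (rule C12, assumption) | (rule C13, assumption) | (rule C14, assumption) | (rule C15, assumption) | (rule C16, assumption) | (rule C17, assumption))+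
qed

lemma equiv:
  assumes "unimodular M \<and> zerofree M \<and> concat_norm M = 3"
  shows "mat_equivalent M M0"
proof -
  obtain x where x2: "M = phi x" and x1: "x \<in> set L18 \<times> (SG \<times> SG) \<times> (SG \<times> SG \<times> SG)"
  proof -
    have "M \<in> phi ` (set L18 \<times> (SG \<times> SG) \<times> (SG \<times> SG \<times> SG))"
      by (rule S_sub) (use assms in auto)
    then show ?thesis by (rule imageE) (rule that)
  qed
  obtain a b c d e f g h i u2 u3 v1 v2 v3 where xx: "x = ((a,b,c,d,e,f,g,h,i),(u2,u3),(v1,v2,v3))"
    by (cases x) auto
  have N: "(a,b,c,d,e,f,g,h,i) \<in> set L18" and S: "u2 \<in> SG" "u3 \<in> SG" "v1 \<in> SG" "v2 \<in> SG" "v3 \<in> SG"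
    using x1 xx by auto
  obtain p q where pq: "inj p" "inj q" "M0 = perm3 p ** mk a b c d e f g h i ** perm3 q"
    using L18_equiv[OF N] by auto
  let ?Du = "mk 1 0 0 0 u2 0 0 0 u3" and ?Dv = "mk v1 0 0 0 v2 0 0 0 v3"
  have one: "(1::int) \<in> SG" unfolding SG_def by simp
  have sq: "u2 * u2 = 1" "u3 * u3 = 1" "v1 * v1 = 1" "v2 * v2 = 1" "v3 * v3 = 1"
    using S unfolding SG_def by auto
  have Mx: "M = ?Du ** mk a b c d e f g h i ** ?Dv"
    unfolding x2 xx phi_def by (simp add: mk_mult mk_eq_iff mult_ac)
  have DD: "?Du ** ?Du = mat 1" "?Dv ** ?Dv = mat 1"
    unfolding mat1_mk by (simp_all add: mk_mult sq)
  have "?Du ** M ** ?Dv = (?Du ** ?Du) ** mk a b c d e f g h i ** (?Dv ** ?Dv)"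
    unfolding Mx by (simp only: matrix_mul_assoc)
  then have eq: "?Du ** M ** ?Dv = mk a b c d e f g h i"
    by (simp only: DD matrix_mul_lid matrix_mul_rid)
  have "M0 = perm3 p ** (?Du ** M ** ?Dv) ** perm3 q"
    using pq(3) by (simp only: eq)
  then have E1: "M0 = (perm3 p ** ?Du) ** M ** (?Dv ** perm3 q)"
    by (simp only: matrix_mul_assoc)
  have E2: "signed_perm_matrix (perm3 p ** ?Du)"
    by (rule spm_mult[OF spm_perm3[OF pq(1)] spm_diag[OF one S(1,2)]])
  have E3: "signed_perm_matrix (?Dv ** perm3 q)"
    by (rule spm_mult[OF spm_diag[OF S(3,4,5)] spm_perm3[OF pq(2)]])
  show ?thesis unfolding mat_equivalent_def
    by (rule exI, rule exI, rule conjI[OF E2 conjI[OF E3 E1]])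
qed

theorem mainTheorem8:
  shows "(\<forall>M::int^3^3. unimodular M \<and> zerofree M \<longrightarrow> 3 \<le> concat_norm M)
    \<and> unimodular M0 \<and> zerofree M0 \<and> concat_norm M0 = 3 \<and> matrix_inv M0 = M0inv
    \<and> card {M::int^3^3. unimodular M \<and> zerofree M \<and> concat_norm M = 3} = 576
    \<and> (\<forall>M::int^3^3. unimodular M \<and> zerofree M \<and> concat_norm M = 3 \<longrightarrow> mat_equivalent M M0)"
proof (intro conjI)
  show "\<forall>M::int^3^3. unimodular M \<and> zerofree M \<longrightarrow> 3 \<le> concat_norm M"
    using lower by (intro allI)
  show "unimodular M0" using M0_props by (rule conjunct1)
  show "zerofree M0" using M0_props by (rule conjunct1[OF conjunct2])
  show "concat_norm M0 = 3" using M0_props by (rule conjunct2[OF conjunct2])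
  show "matrix_inv M0 = M0inv" by (rule M0_inv)
  show "card {M::int^3^3. unimodular M \<and> zerofree M \<and> concat_norm M = 3} = 576" by (rule card_S)
  show "\<forall>M::int^3^3. unimodular M \<and> zerofree M \<and> concat_norm M = 3 \<longrightarrow> mat_equivalent M M0"
    using equiv by blast
qed

end
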